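(* For $n\in\{1,2\}$ and every $x>0$, $$\sqrt[n]{\frac{\bigl\vert\psi^{(n)}(x)\bigr\vert}{(n-1)!}}\, > e^{-\psi(1/\ln(1+1/x))}.$$ Moreover, for every $n\in\mathbb{N}$, every integer $k$ with $1\le k\le n-1$, and every $x>0$, $$\sqrt[n]{\frac{\bigl\vert\psi^{(n)}(x)\bigr\vert}{(n-1)!}}\, > \sqrt[k]{\frac{\bigl\vert\psi^{(k)}\bigl(1/\ln(1+1/x)\bigr)\bigr\vert}{(k-1)!}}.$$
   Context: $\Gamma(x)=\int_0^\infty t^{x-1}e^{-t}\,dt$ for $x>0$ is Euler's gamma function, $\psi(x)=\Gamma'(x)/\Gamma(x)$ is the psi (digamma) function, and $\psi^{(i)}$ for $i\in\mathbb{N}$ denotes the $i$-th derivative of $\psi$ (polygamma functions). *)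

theory Defs
  imports "HOL-Analysis.Analysis"
begin

end

theory Submission
  imports Defs "HOL-Real_Asymp.Real_Asymp"
begin

lemma exp_ge_cubic:
  fixes x :: real assumes "x \<ge> 0"
  shows "1 + x + x^2/2 + x^3/6 \<le> exp x"
proof -
  have s: "(\<lambda>n. x^n / fact n) sums exp x"
    using exp_converges[of x] by (simp add: scaleR_conv_of_real divide_inverse mult.commute)
  have "(\<Sum>n<4. x^n / fact n) \<le> (\<Sum>n. x^n / fact n)"
    by (rule sum_le_suminf) (use s assms in \<open>auto simp: sums_iff\<close>)
  also have "\<dots> = exp x" using s by (simp add: sums_iff)
  finally show ?thesis by (simp add: eval_nat_numeral fact_numeral)
qed

lemma exp_neg_le_quad:
  fixes w :: real assumes "w \<ge> 0"
  shows "exp (-w) \<le> 1 - w + w^2/2"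
proof -
  let ?g = "\<lambda>w. 1 - w + w^2/2 - exp (-w)"
  have "?g 0 \<le> ?g w"
  proof (rule DERIV_nonneg_imp_increasing_open[OF assms])
    fix y :: real
    have "(?g has_real_derivative (-1 + y + exp (-y))) (at y)"
      by (auto intro!: derivative_eq_intros simp: power2_eq_square)
    moreover have "-1 + y + exp (-y) \<ge> 0" using exp_ge_add_one_self[of "-y"] by linarith
    ultimately show "\<exists>d. (?g has_real_derivative d) (at y) \<and> d \<ge> 0" by blast
  next
    show "continuous_on {0..w} ?g" by (intro continuous_intros) auto
  qed
  then show ?thesis by simp
qed

lemma ln_quad_bound:
  fixes s :: real assumes "s \<ge> 0"
  shows "(1 + s) * ln (1 + s) \<le> s + s^2/2"
proof -
  let ?g = "\<lambda>s. s + s^2/2 - (1 + s) * ln (1 + s)"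
  have "?g 0 \<le> ?g s"
  proof (rule DERIV_nonneg_imp_increasing_open[OF assms])
    fix y :: real assume y: "0 < y"
    have "(?g has_real_derivative (y - ln (1 + y))) (at y)"
      using y by (auto intro!: derivative_eq_intros)
    moreover have "y - ln (1 + y) \<ge> 0" using ln_add_one_self_le_self[of y] y by linarith
    ultimately show "\<exists>d. (?g has_real_derivative d) (at y) \<and> d \<ge> 0" by blast
  next
    show "continuous_on {0..s} ?g" using assms by (intro continuous_intros) auto
  qed
  then show ?thesis by simp
qed

lemma ln_sqrt_bound:
  fixes z :: real assumes "z \<ge> 1"
  shows "2 * ln z \<le> z - 1/z"
proof -
  let ?g = "\<lambda>z. z - 1/z - 2 * ln z"
  have "?g 1 \<le> ?g z"
  proof (rule DERIV_nonneg_imp_increasing_open[OF assms])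
    fix y :: real assume y: "1 < y"
    have "(?g has_real_derivative (1 + 1/y^2 - 2/y)) (at y)"
      using y by (auto intro!: derivative_eq_intros simp: power2_eq_square field_simps)
    moreover have "1 + 1/y^2 - 2/y = (1 - 1/y)^2" using y by (simp add: field_simps power2_eq_square)
    ultimately show "\<exists>d. (?g has_real_derivative d) (at y) \<and> d \<ge> 0" by auto
  next
    show "continuous_on {1..z} ?g" using assms by (intro continuous_intros) auto
  qed
  then show ?thesis by simp
qed



lemma E1:
  fixes v :: real assumes v: "v > 0"
  shows "exp v - exp (v/(1+v)) \<ge> v^2"
proof -
  define w where "w = v/(1+v)"
  have w0: "w \<ge> 0" using v by (simp add: w_def)
  have vw: "v - w = v * w" using v by (simp add: w_def field_simps power2_eq_square)
  have vw2: "v * w = v^2 * (1 - w)" using v by (simp add: w_def field_simps power2_eq_square)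
  have "exp v = exp w * exp (v * w)" using vw by (metis add.commute diff_add_cancel exp_add)
  hence "exp v - exp w = exp w * (exp (v * w) - 1)" by (simp add: algebra_simps)
  moreover have "exp (v * w) - 1 \<ge> v * w + (v * w)^2/2"
  proof -
    have "(v * w)^3 \<ge> 0" using v w0 by simp
    moreover have "0 \<le> v * w" using v w0 by simp
    ultimately show ?thesis using exp_ge_cubic[of "v * w"] by linarith
  qed
  moreover have "v * w + (v * w)^2/2 \<ge> v^2 * (1 - w + w^2/2)"
    using vw2 by (simp add: power_mult_distrib algebra_simps)
  moreover have "exp w * (1 - w + w^2/2) \<ge> 1"
  proof -
    have "exp (-w) \<le> 1 - w + w^2/2" by (rule exp_neg_le_quad[OF w0])
    hence "exp w * exp (-w) \<le> exp w * (1 - w + w^2/2)" by simp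
    thus ?thesis by (simp add: exp_minus)
  qed
  ultimately have "exp v - exp w \<ge> exp w * (v^2 * (1 - w + w^2/2))"
    by (metis exp_gt_zero less_eq_real_def mult_left_mono order_trans)
  also have "exp w * (v^2 * (1 - w + w^2/2)) = v^2 * (exp w * (1 - w + w^2/2))" by simp
  also have "\<dots> \<ge> v^2 * 1" by (rule mult_left_mono) (use \<open>exp w * (1 - w + w^2/2) \<ge> 1\<close> in auto)
  finally show ?thesis by (simp add: w_def)
qed

lemma E2:
  fixes v :: real assumes v: "v > 0"
  shows "(exp v - 1) * (exp (v/(1+v)) - 1) \<ge> v^2"
proof -
  define w where "w = v/(1+v)"
  have w0: "w \<ge> 0" using v by (simp add: w_def)
  have a: "exp v - 1 \<ge> (6 * v + 3 * v^2 + v^3)/6" using exp_ge_cubic[of v] v by simp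
  have b: "exp w - 1 \<ge> (6 * w + 3 * w^2 + w^3)/6" using exp_ge_cubic[of w] w0 by simp
  have e: "w * (1+v) = v" using v by (simp add: w_def)
  have "(6 * w + 3 * w^2 + w^3) * (1+v)^3
        = 6 * (w * (1+v)) * (1+v)^2 + 3 * (w * (1+v))^2 * (1+v) + (w * (1+v))^3"
    by (simp add: power2_eq_square power3_eq_cube algebra_simps)
  also have "\<dots> = 6 * v * (1+v)^2 + 3 * v^2 * (1+v) + v^3" by (simp only: e)
  finally have W: "(6 * w + 3 * w^2 + w^3) * (1+v)^3 = 6 * v * (1+v)^2 + 3 * v^2 * (1+v) + v^3" .
  have "(6 * v + 3 * v^2 + v^3) * (6 * w + 3 * w^2 + w^3) * (1+v)^3
        = (6 * v + 3 * v^2 + v^3) * (6 * v * (1+v)^2 + 3 * v^2 * (1+v) + v^3)"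
    using W by (simp add: mult.assoc)
  also have "\<dots> = 36 * (v^2 * (1+v)^3) + (3 * v^4 + 9 * v^5 + 10 * v^6)"
    by (simp add: power2_eq_square power3_eq_cube eval_nat_numeral algebra_simps)
  also have "\<dots> \<ge> 36 * (v^2 * (1+v)^3)" using v by simp
  finally have "(36 * v^2) * (1+v)^3 \<le> (6 * v + 3 * v^2 + v^3) * (6 * w + 3 * w^2 + w^3) * (1+v)^3"
    by (simp add: mult.assoc)
  hence "36 * v^2 \<le> (6 * v + 3 * v^2 + v^3) * (6 * w + 3 * w^2 + w^3)"
    using v by (simp add: mult_le_cancel_right)
  hence "v^2 \<le> ((6 * v + 3 * v^2 + v^3)/6) * ((6 * w + 3 * w^2 + w^3)/6)" by (simp only: times_divide_times_eq)
  also have "\<dots> \<le> (exp v - 1) * (exp w - 1)"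
    using a b v w0 by (intro mult_mono) auto
  finally show ?thesis by (simp add: w_def)
qed

lemma four_mult_le: "4 * (x * y) \<le> (x + y)^2" for x y :: real
proof -
  have "(x + y)^2 = 4 * (x * y) + (x - y)^2" by (simp add: power2_eq_square algebra_simps)
  thus ?thesis by simp
qed

lemma pow_diff_bound:
  fixes a b v :: real
  assumes a: "a \<ge> 0" and b: "b \<ge> 0" and v: "v \<ge> 0"
      and ab: "a * b \<ge> v^2" and d: "a - b \<ge> v^2"
  shows "a^k - b^k \<ge> real k * v^(k+1)"
proof -
  let ?S = "\<lambda>i. b^(k - Suc i) * a^i"
  have pair: "?S i + ?S (k - Suc i) \<ge> 2 * v^(k - 1)" if i: "i < k" for i
  proof -
    have e: "?S i * ?S (k - Suc i) = (a * b)^(k-1)"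
    proof -
      have kk: "k - Suc (k - Suc i) = i" using i by simp
      have "i + (k - Suc i) = k - 1" using i by simp
      hence "a^i * a^(k - Suc i) = a^(k-1)" "b^i * b^(k - Suc i) = b^(k-1)"
        by (simp_all add: power_add[symmetric])
      moreover have "?S i * ?S (k - Suc i) = (a^i * a^(k - Suc i)) * (b^i * b^(k-Suc i))"
        using kk by (simp add: algebra_simps)
      ultimately show ?thesis by (simp add: power_mult_distrib)
    qed
    have "(v^(k-1))^2 = (v^2)^(k-1)" by (metis power_mult mult.commute)
    also have "\<dots> \<le> (a * b)^(k-1)" by (rule power_mono[OF ab]) simp
    finally have "(v^(k-1))^2 \<le> (a * b)^(k-1)" .
    have "(2 * v^(k-1))^2 = 4 * (v^(k-1))^2" by (simp add: power_mult_distrib)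
    also have "\<dots> \<le> 4 * (?S i * ?S (k - Suc i))" using e \<open>(v^(k-1))^2 \<le> (a * b)^(k-1)\<close> by simp
    also have "\<dots> \<le> (?S i + ?S (k - Suc i))^2"
      by (rule four_mult_le)
    finally show ?thesis
      by (rule power2_le_imp_le) (use a b in auto)
  qed
  have R: "(\<Sum>i<k. ?S (k - Suc i)) = (\<Sum>i<k. ?S i)" by (rule sum.nat_diff_reindex)
  have "2 * (\<Sum>i<k. ?S i) = (\<Sum>i<k. ?S i) + (\<Sum>i<k. ?S (k - Suc i))"
    by (simp only: R)
  also have "\<dots> = (\<Sum>i<k. ?S i + ?S (k - Suc i))" by (simp add: sum.distrib)
  also have "\<dots> \<ge> (\<Sum>i<k. 2 * v^(k-1))" by (rule sum_mono) (use pair in auto)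
  finally have S: "(\<Sum>i<k. ?S i) \<ge> real k * v^(k-1)" by simp
  have "0 \<le> a - b" using d zero_le_power2[of v] by linarith
  have "a^k - b^k = (a - b) * (\<Sum>i<k. ?S i)" by (rule power_diff_sumr2)
  also have "\<dots> \<ge> v^2 * (real k * v^(k-1))"
    using d S v \<open>0 \<le> a - b\<close> by (intro mult_mono) (auto intro!: sum_nonneg simp: a b)
  finally have F: "v^2 * (real k * v^(k-1)) \<le> a^k - b^k" .
  show ?thesis
  proof (cases k)
    case (Suc m) then show ?thesis using F
      by (simp add: power2_eq_square algebra_simps)
  qed simp
qed



lemma telescope_nonneg:
  fixes D :: "real \<Rightarrow> real"
  assumes y: "y > 0" and step: "\<And>z. z > 0 \<Longrightarrow> D (z + 1) \<le> D z"
      and lim: "(\<lambda>m. D (y + real m)) \<longlonglongrightarrow> 0"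
  shows "0 \<le> D y"
proof -
  have le: "D (y + real m) \<le> D y" for m
  proof (induction m)
    case 0 then show ?case by simp
  next
    case (Suc m)
    have "D (y + real (Suc m)) = D ((y + real m) + 1)" by (simp add: algebra_simps)
    also have "\<dots> \<le> D (y + real m)" using y by (intro step) simp
    finally show ?case using Suc by simp
  qed
  show ?thesis by (rule LIMSEQ_le_const2[OF lim]) (use le in auto)
qed

lemma P_step:
  fixes y :: real assumes "y \<noteq> 0"
  shows "(-1)^Suc n * Polygamma n (y + 1) = (-1)^Suc n * Polygamma n y - fact n / y^Suc n"
proof -
  have "Polygamma n (y+1) = Polygamma n y + (-1)^n * fact n / y^Suc n" by (rule Polygamma_plus1[OF assms])
  moreover have "(-1::real)^n * (-1)^n = 1"
  proof -
    have "(-1::real)^n * (-1)^n = ((-1) * (-1))^n" by (simp only: power_mult_distrib)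
    thus ?thesis by simp
  qed
  ultimately show ?thesis by (simp add: algebra_simps)
qed

lemma P_lim:
  fixes y :: real assumes n: "n > 0" and y: "y > 0"
  shows "(\<lambda>m. Polygamma n (y + real m)) \<longlonglongrightarrow> 0"
proof -
  have y0: "y \<noteq> 0" using y by simp
  have eq: "Polygamma n (y + real m) = Polygamma n y + (-1)^n * fact n * (\<Sum>k<m. inverse ((y + real k)^Suc n))" for m
    using Polygamma_plus_of_nat[of m y n] y by (auto simp: divide_inverse)
  have s: "(\<lambda>k. inverse ((y + real k)^Suc n)) sums ((-1)^Suc n * Polygamma n y / fact n)"
    using Polygamma_LIMSEQ[OF y0 n] by simp
  hence "(\<lambda>m. \<Sum>k<m. inverse ((y + real k)^Suc n)) \<longlonglongrightarrow> ((-1)^Suc n * Polygamma n y / fact n)"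
    by (simp add: sums_def)
  hence "(\<lambda>m. Polygamma n y + (-1)^n * fact n * (\<Sum>k<m. inverse ((y + real k)^Suc n)))
          \<longlonglongrightarrow> Polygamma n y + (-1)^n * fact n * ((-1)^Suc n * Polygamma n y / fact n)"
    by (intro tendsto_intros)
  also have "Polygamma n y + (-1)^n * fact n * ((-1)^Suc n * Polygamma n y / fact n) = 0"
    by (simp add: algebra_simps)
  finally show ?thesis by (simp only: eq)
qed

lemma P_abs:
  fixes y :: real assumes n: "n > 0" and y: "y > 0"
  shows "\<bar>Polygamma n y\<bar> = (-1)^Suc n * Polygamma n y"
proof (cases "even n")
  case True
  hence "Polygamma n y < 0" using Polygamma_real_even_neg[OF y n] by simp
  thus ?thesis using True by simp
next
  case False
  hence "Polygamma n y > 0" using Polygamma_real_odd_pos[of y n] y nonpos_Ints_nonpos[of y] by force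
  thus ?thesis using False by simp
qed

lemma P_ge:
  fixes G :: "real \<Rightarrow> real"
  assumes n: "n > 0" and y: "y > 0"
      and step: "\<And>z. z > 0 \<Longrightarrow> G z - G (z + 1) \<le> fact n / z^Suc n"
      and lim: "(\<lambda>m. G (y + real m)) \<longlonglongrightarrow> 0"
  shows "G y \<le> (-1)^Suc n * Polygamma n y"
proof -
  let ?D = "\<lambda>z. (-1)^Suc n * Polygamma n z - G z"
  have "0 \<le> ?D y"
  proof (rule telescope_nonneg[OF y])
    fix z :: real assume z: "z > 0"
    show "?D (z + 1) \<le> ?D z" using P_step[of z n] step[OF z] z by simp
  next
    have "(\<lambda>m. (-1)^Suc n * Polygamma n (y + real m) - G (y + real m)) \<longlonglongrightarrow> (-1)^Suc n * 0 - 0"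
      by (intro tendsto_intros P_lim n y lim)
    thus "(\<lambda>m. ?D (y + real m)) \<longlonglongrightarrow> 0" by simp
  qed
  thus ?thesis by simp
qed

lemma P_gt:
  fixes G :: "real \<Rightarrow> real"
  assumes n: "n > 0" and y: "y > 0"
      and step: "\<And>z. z > 0 \<Longrightarrow> G z - G (z + 1) \<le> fact n / z^Suc n"
      and strict: "G y - G (y + 1) < fact n / y^Suc n"
      and lim: "\<And>y. y > 0 \<Longrightarrow> (\<lambda>m. G (y + real m)) \<longlonglongrightarrow> 0"
  shows "G y < (-1)^Suc n * Polygamma n y"
proof -
  have "G (y + 1) \<le> (-1)^Suc n * Polygamma n (y + 1)"
    using y by (intro P_ge[OF n _ step lim]) auto
  thus ?thesis using P_step[of y n] strict y by simp
qed

lemma P_le: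
  fixes G :: "real \<Rightarrow> real"
  assumes n: "n > 0" and y: "y > 0"
      and step: "\<And>z. z > 0 \<Longrightarrow> G z - G (z + 1) \<ge> fact n / z^Suc n"
      and lim: "(\<lambda>m. G (y + real m)) \<longlonglongrightarrow> 0"
  shows "(-1)^Suc n * Polygamma n y \<le> G y"
proof -
  let ?D = "\<lambda>z. G z - (-1)^Suc n * Polygamma n z"
  have "0 \<le> ?D y"
  proof (rule telescope_nonneg[OF y])
    fix z :: real assume z: "z > 0"
    show "?D (z + 1) \<le> ?D z" using P_step[of z n] step[OF z] z by simp
  next
    have "(\<lambda>m. G (y + real m) - (-1)^Suc n * Polygamma n (y + real m)) \<longlonglongrightarrow> 0 - (-1)^Suc n * 0"
      by (intro tendsto_intros P_lim n y lim)
    thus "(\<lambda>m. ?D (y + real m)) \<longlonglongrightarrow> 0" by simp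
  qed
  thus ?thesis by simp
qed

lemma Digamma_lower:
  fixes y :: real assumes y: "y > 0"
  shows "ln y - 1/y \<le> Digamma y"
proof -
  let ?D = "\<lambda>z. Digamma z - ln z + 1/z"
  have "0 \<le> ?D y"
  proof (rule telescope_nonneg[OF y])
    fix z :: real assume z: "z > 0"
    have "ln (z/(z+1)) \<le> z/(z+1) - 1" using z by (intro ln_le_minus_one) simp
    also have "z/(z+1) - 1 = - 1/(z+1)" using z by (simp add: field_simps)
    finally have "ln z - ln (z+1) \<le> - 1/(z+1)" using z by (simp add: ln_div)
    thus "?D (z + 1) \<le> ?D z" using z by (simp add: Digamma_plus1)
  next
    have y0: "y \<noteq> 0" using y by simp
    have eq: "Digamma (y + real m) = Digamma y + (\<Sum>k<m. inverse (y + real k))" for m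
      using Polygamma_plus_of_nat[of m y 0] y by (auto simp: divide_inverse)
    have L: "(\<lambda>m. ln (real m) - (\<Sum>k<m. inverse (y + real k))) \<longlonglongrightarrow> Digamma y"
      using Digamma_LIMSEQ[OF y0] by simp
    have L2: "(\<lambda>m. ln (real m) - ln (y + real m)) \<longlonglongrightarrow> 0" using y by real_asymp
    have L3: "(\<lambda>m. 1 / (y + real m)) \<longlonglongrightarrow> 0" using y by real_asymp
    have "(\<lambda>m. Digamma y - (ln (real m) - (\<Sum>k<m. inverse (y + real k))) + (ln (real m) - ln (y + real m)) + 1 / (y + real m))
           \<longlonglongrightarrow> Digamma y - Digamma y + 0 + 0"
      by (intro tendsto_intros L L2 L3)
    thus "(\<lambda>m. ?D (y + real m)) \<longlonglongrightarrow> 0" by (simp add: eq algebra_simps)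
  qed
  thus ?thesis by simp
qed



lemma inv_pow_diff:
  fixes z :: real assumes z: "z > 0" and n: "n > 0"
  shows "1/z^n - 1/(z+1)^n < real n / z^Suc n"
proof -
  have "(z+1)^n - z^n = ((z+1) - z) * (\<Sum>i<n. z^(n - Suc i) * (z+1)^i)" by (rule power_diff_sumr2)
  also have "\<dots> = (\<Sum>i<n. z^(n - Suc i) * (z+1)^i)" by simp
  also have "\<dots> \<le> (\<Sum>i<n. (z+1)^(n-1))"
  proof (rule sum_mono)
    fix i assume i: "i \<in> {..<n}"
    have "z^(n - Suc i) * (z+1)^i \<le> (z+1)^(n - Suc i) * (z+1)^i"
      using z by (intro mult_right_mono power_mono) auto
    also have "\<dots> = (z+1)^(n-1)" using i by (simp add: power_add[symmetric])
    finally show "z^(n - Suc i) * (z+1)^i \<le> (z+1)^(n-1)" .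
  qed
  also have "\<dots> = real n * (z+1)^(n-1)" by simp
  finally have A: "(z+1)^n - z^n \<le> real n * (z+1)^(n-1)" .
  have "1/z^n - 1/(z+1)^n = ((z+1)^n - z^n) / (z^n * (z+1)^n)"
    using z by (simp add: field_simps)
  also have "\<dots> \<le> real n * (z+1)^(n-1) / (z^n * (z+1)^n)"
    using A z by (intro divide_right_mono) auto
  also have "\<dots> = real n / (z^n * (z+1))"
  proof -
    have e: "(z+1)^n = (z+1)^(n-1) * (z+1)" using n by (simp add: power_Suc2[symmetric])
    have c: "(r::real) * A / (B * (A * C)) = r / (B * C)" if "A \<noteq> 0" for r A B C
      using that by simp
    have "(z+1)^(n-1) \<noteq> 0" using z by simp
    thus ?thesis unfolding e by (rule c)
  qed
  also have "\<dots> < real n / z^Suc n"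
    using z n by (intro divide_strict_left_mono) (auto simp: mult_strict_left_mono)
  finally show ?thesis .
qed

lemma lower_general:
  fixes x :: real assumes n: "n > 0" and x: "x > 0"
  shows "\<bar>Polygamma n x\<bar> / fact (n - 1) > (1/x)^n"
proof -
  let ?G = "\<lambda>y::real. fact (n - 1) * (1/y)^n"
  have fn: "fact n = real n * fact (n - 1)" using n by (metis fact_reduce of_nat_fact)
  have st: "?G z - ?G (z + 1) < fact n / z^Suc n" if z: "z > 0" for z
  proof -
    have "?G z - ?G (z + 1) = fact (n - 1) * (1/z^n - 1/(z+1)^n)"
      by (simp add: power_divide algebra_simps)
    also have "\<dots> < fact (n - 1) * (real n / z^Suc n)"
      using inv_pow_diff[OF z n] by (intro mult_strict_left_mono) auto
    also have "\<dots> = fact n / z^Suc n" by (simp add: fn)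
    finally show ?thesis .
  qed
  have lim: "(\<lambda>m. ?G (y + real m)) \<longlonglongrightarrow> 0" if y: "y > 0" for y
  proof -
    have "(\<lambda>m. 1 / (y + real m)) \<longlonglongrightarrow> 0" using y by real_asymp
    from tendsto_mult[OF tendsto_const tendsto_power[OF this, of n], of "fact (n - 1)"]
    have L: "(\<lambda>m. fact (n - 1) * (1 / (y + real m))^n) \<longlonglongrightarrow> fact (n - 1) * 0^n" .
    have Z: "fact (n - 1) * 0^n = (0::real)" using n by simp
    show ?thesis using L unfolding Z .
  qed
  have "?G x < (-1)^Suc n * Polygamma n x"
    by (rule P_gt[OF n x]) (use st less_imp_le lim x in auto)
  hence "fact (n - 1) * (1/x)^n < \<bar>Polygamma n x\<bar>" using P_abs[OF n x] by simp
  thus ?thesis by (simp add: field_simps)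
qed

lemma upper_general:
  fixes t :: real assumes k: "k > 0" and t: "t > 0"
  shows "\<bar>Polygamma k t\<bar> / fact (k - 1) \<le> (exp (1/t) - 1)^k"
proof -
  let ?G = "\<lambda>y::real. fact (k - 1) * (exp (1/y) - 1)^k"
  have fk: "fact k = real k * fact (k - 1)" using k by (metis fact_reduce of_nat_fact)
  have st: "?G z - ?G (z + 1) \<ge> fact k / z^Suc k" if z: "z > 0" for z
  proof -
    define v where "v = 1/z"
    have v: "v > 0" using z by (simp add: v_def)
    have w: "1/(z+1) = v/(1+v)" using z by (simp add: v_def field_simps)
    have "real k * v^(k+1) \<le> (exp v - 1)^k - (exp (v/(1+v)) - 1)^k"
    proof (rule pow_diff_bound)
      show "0 \<le> exp v - 1" using v by simp
      show "0 \<le> exp (v/(1+v)) - 1" using v by simp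
      show "0 \<le> v" using v by simp
      show "v^2 \<le> (exp v - 1) * (exp (v/(1+v)) - 1)" by (rule E2[OF v])
      show "v^2 \<le> (exp v - 1) - (exp (v/(1+v)) - 1)" using E1[OF v] by simp
    qed
    hence "fact (k - 1) * (real k * v^(k+1)) \<le> fact (k - 1) * ((exp v - 1)^k - (exp (v/(1+v)) - 1)^k)"
      by (intro mult_left_mono) auto
    moreover have "fact (k - 1) * (real k * v^(k+1)) = fact k / z^Suc k"
      by (simp add: fk v_def power_divide)
    moreover have "?G z - ?G (z + 1) = fact (k - 1) * ((exp v - 1)^k - (exp (v/(1+v)) - 1)^k)"
      by (simp add: w[symmetric] v_def[symmetric] algebra_simps)
    ultimately show ?thesis by linarith
  qed
  have lim: "(\<lambda>m. ?G (t + real m)) \<longlonglongrightarrow> 0"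
  proof -
    have "(\<lambda>m. 1 / (t + real m)) \<longlonglongrightarrow> 0" using t by real_asymp
    hence "(\<lambda>m. exp (1 / (t + real m)) - 1) \<longlonglongrightarrow> exp 0 - 1" by (intro tendsto_intros)
    from tendsto_mult[OF tendsto_const tendsto_power[OF this, of k], of "fact (k - 1)"]
    have L: "(\<lambda>m. fact (k - 1) * (exp (1 / (t + real m)) - 1)^k) \<longlonglongrightarrow> fact (k - 1) * (exp 0 - 1)^k" .
    have Z: "fact (k - 1) * (exp 0 - 1)^k = (0::real)" using k by simp
    show ?thesis using L unfolding Z .
  qed
  have "(-1)^Suc k * Polygamma k t \<le> ?G t"
    by (rule P_le[OF k t st lim])
  hence "\<bar>Polygamma k t\<bar> \<le> fact (k - 1) * (exp (1/t) - 1)^k" using P_abs[OF k t] by simp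
  thus ?thesis by (simp add: field_simps)
qed

lemma lower_1:
  fixes x :: real assumes x: "x > 0"
  shows "Polygamma 1 x > 1/x + 1/(2 * x^2)"
proof -
  let ?G = "\<lambda>y::real. 1/y + 1/(2 * y^2)"
  have st: "?G z - ?G (z + 1) < fact 1 / z^Suc 1" if z: "z > 0" for z :: real
  proof -
    have "1/z + 1/(2 * z^2) - (1/(z+1) + 1/(2 * (z+1)^2)) < 1/z^2"
      using z by (simp add: divide_simps) (simp add: algebra_simps power2_eq_square add_pos_pos mult_pos_pos)
    thus ?thesis by (simp add: power2_eq_square)
  qed
  have lim: "(\<lambda>m. ?G (y + real m)) \<longlonglongrightarrow> 0" if y: "y > 0" for y
    using y by real_asymp
  have "?G x < (-1)^Suc 1 * Polygamma 1 x"
    by (rule P_gt) (use st less_imp_le lim x in auto)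
  thus ?thesis by simp
qed

lemma lower_2:
  fixes x :: real assumes x: "x > 0"
  shows "- Polygamma 2 x > 1/x^2 + 1/x^3"
proof -
  let ?G = "\<lambda>y::real. 1/y^2 + 1/y^3"
  have st: "?G z - ?G (z + 1) < fact 2 / z^Suc 2" if z: "z > 0" for z :: real
  proof -
    define a where "a = z + 1"
    have a: "a > 0" using z by (simp add: a_def)
    have "1/z^2 + 1/z^3 - (1/a^2 + 1/a^3) = (z * a^3 + a^3 - z^3 * a - z^3) / (z^3 * a^3)"
      using z a by (simp add: field_simps power2_eq_square power3_eq_cube)
    also have "z * a^3 + a^3 - z^3 * a - z^3 = 2 * a^3 - (2 * z + 1)"
      by (simp add: a_def algebra_simps power3_eq_cube)
    also have "(2 * a^3 - (2 * z + 1)) / (z^3 * a^3) = 2/z^3 - (2 * z + 1) / (z^3 * a^3)"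
      using z a by (simp add: diff_divide_distrib)
    also have "\<dots> < 2/z^3" using z a by simp
    finally show ?thesis by (simp add: a_def fact_numeral)
  qed
  have lim: "(\<lambda>m. ?G (y + real m)) \<longlonglongrightarrow> 0" if y: "y > 0" for y
    using y by real_asymp
  have "?G x < (-1)^Suc 2 * Polygamma 2 x"
    by (rule P_gt) (use st less_imp_le lim x in auto)
  thus ?thesis by simp
qed



theorem theorem1p1:
  shows "(\<forall>n::nat. \<forall>x::real. (n = 1 \<or> n = 2) \<and> x > 0 \<longrightarrow>
            root n (\<bar>Polygamma n x\<bar> / fact (n - 1))
              > exp (- Digamma (1 / ln (1 + 1 / x))))
       \<and> (\<forall>n::nat. \<forall>k::nat. \<forall>x::real. 1 \<le> k \<and> k \<le> n - 1 \<and> x > 0 \<longrightarrow>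
            root n (\<bar>Polygamma n x\<bar> / fact (n - 1))
              > root k (\<bar>Polygamma k (1 / ln (1 + 1 / x))\<bar> / fact (k - 1)))"
proof (intro conjI allI impI)
  fix n :: nat and x :: real
  assume h: "(n = 1 \<or> n = 2) \<and> x > 0"
  hence x: "x > 0" by simp
  define s where "s = 1/x"
  define u where "u = ln (1 + 1/x)"
  have s: "s > 0" using x by (simp add: s_def)
  have u: "u > 0" using x by (simp add: u_def ln_gt_zero)
  have eu: "exp u = 1 + s" using x by (simp add: u_def s_def add_pos_pos)
  have dig: "exp (- Digamma (1 / ln (1 + 1 / x))) \<le> u * (1 + s)"
  proof -
    have "ln (1/u) - 1/(1/u) \<le> Digamma (1/u)" using u by (intro Digamma_lower) simp
    hence "- Digamma (1/u) \<le> ln u + u" using u by (simp add: ln_div)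
    hence "exp (- Digamma (1/u)) \<le> exp (ln u + u)" by simp
    also have "\<dots> = u * (1 + s)" using u by (simp add: exp_add eu)
    finally show ?thesis by (simp add: u_def)
  qed
  have q: "u * (1 + s) \<le> s + s^2/2" using ln_quad_bound[of s] s by (simp add: u_def s_def mult.commute)
  from h consider "n = 1" | "n = 2" by blast
  then show "root n (\<bar>Polygamma n x\<bar> / fact (n - 1)) > exp (- Digamma (1 / ln (1 + 1 / x)))"
  proof cases
    case 1
    have "Polygamma 1 x > s + s^2/2" using lower_1[OF x] by (simp add: s_def power_divide)
    hence "\<bar>Polygamma 1 x\<bar> > s + s^2/2" by linarith
    thus ?thesis using 1 dig q by simp
  next
    case 2
    have A: "- Polygamma 2 x > s^2 + s^3" using lower_2[OF x] by (simp add: s_def power_divide)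
    have P: "\<bar>Polygamma 2 x\<bar> = - Polygamma 2 x" using P_abs[of 2 x] x by simp
    define z where "z = sqrt (1 + s)"
    have z: "z \<ge> 1" using s by (simp add: z_def)
    have z2: "z^2 = 1 + s" using s by (simp add: z_def)
    have "2 * ln z \<le> z - 1/z" by (rule ln_sqrt_bound[OF z])
    moreover have "2 * ln z = u"
    proof -
      have "ln (z^2) = 2 * ln z" using z by (simp add: ln_realpow)
      thus ?thesis using z2 by (simp add: u_def s_def)
    qed
    moreover have "z - 1/z = s / z" using z z2 by (simp add: field_simps power2_eq_square)
    ultimately have "u \<le> s / z" by simp
    hence "u * z \<le> s" using z by (simp add: field_simps)
    hence "(u * z)^2 \<le> s^2" using u z by (intro power_mono) auto
    hence "u^2 * (1 + s) \<le> s^2" by (simp add: power_mult_distrib z2)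
    hence "u^2 * (1 + s) * (1 + s) \<le> s^2 * (1 + s)" using s by (intro mult_right_mono) auto
    hence B: "(u * (1 + s))^2 \<le> s^2 + s^3"
      by (simp add: power_mult_distrib power2_eq_square power3_eq_cube algebra_simps)
    have "u * (1 + s) = root 2 ((u * (1 + s))^2)" using u s by (simp add: real_root_power_cancel)
    also have "\<dots> \<le> root 2 (s^2 + s^3)" using B by (simp add: real_root_le_mono)
    also have "\<dots> < root 2 (\<bar>Polygamma 2 x\<bar>)" using A P by (simp add: real_root_less_mono)
    finally show ?thesis using 2 dig by simp
  qed
next
  fix n k :: nat and x :: real
  assume h: "1 \<le> k \<and> k \<le> n - 1 \<and> x > 0"
  hence x: "x > 0" and k: "k > 0" and n: "n > 0" by auto
  define u where "u = ln (1 + 1/x)"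
  have u: "u > 0" using x by (simp add: u_def ln_gt_zero)
  have eu: "exp (1 / (1/u)) - 1 = 1/x" using x by (simp add: u_def add_pos_pos)
  have "root k (\<bar>Polygamma k (1/u)\<bar> / fact (k - 1)) \<le> root k ((exp (1 / (1/u)) - 1)^k)"
    using upper_general[OF k, of "1/u"] u k by (simp add: real_root_le_mono)
  also have "\<dots> = 1/x" using eu x k by (simp add: real_root_power_cancel)
  also have "1/x = root n ((1/x)^n)" using x n by (simp add: real_root_power_cancel)
  also have "\<dots> < root n (\<bar>Polygamma n x\<bar> / fact (n - 1))"
    using lower_general[OF n x] n by (simp add: real_root_less_mono)
  finally show "root n (\<bar>Polygamma n x\<bar> / fact (n - 1))
              > root k (\<bar>Polygamma k (1 / ln (1 + 1 / x))\<bar> / fact (k - 1))" by (simp add: u_def)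
qed


end
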